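(* Let $p\ge2$ be an integer. Let $f$ be either the binary loop $C_p$ (with $n=2$) or the $n$-ary iterated group $f(x_1,\dots,x_n)=x_1+\dots+x_n$ of $\mathbb{Z}_p\times\mathbb{Z}_2$ ($n\ge2$), and for $i=1,\dots,n$ let $h_i$ be the $m_i$-ary iterated group of $D_p$, $h_i(z_1,\dots,z_{m_i})=z_1\circ\cdots\circ z_{m_i}$ ($m_i\ge1$). Then the MDS code $M=\{(x,\overline z_1,\dots,\overline z_n): x=f(h_1(\overline z_1),\dots,h_n(\overline z_n))\}\subseteq Q_{2p}^{1+m_1+\dots+m_n}$ is isotopically transitive.
   Context: Let $Q_{2p}=\{x_\zeta : x\in\mathbb{Z}_p,\ \zeta\in\{0,1\}\}$, with $0_0$ playing the role of $0$. Arithmetic on the main symbol is mod $p$, on subscripts mod $2$ ($\oplus$). The group $\mathbb{Z}_p\times\mathbb{Z}_2$: $x_\zeta+y_\xi=(x+y)_{\zeta\oplus\xi}$. The dihedral group $D_p$: $x_\zeta\circ y_\xi=((-1)^\xi x+y)_{\zeta\oplus\xi}$. The loop $C_p$: $x_\zeta\ast y_\xi=((-1)^\xi x+y+\zeta\xi)_{\zeta\oplus\xi}$. An isotopism of $Q_{2p}^N$ is a map $\overline{x}\mapsto(\tau_1x_1,\dots,\tau_Nx_N)$ with $\tau_i$ permutations of $Q_{2p}$; a set is isotopically transitive if the group of isotopisms mapping it onto itself acts transitively on it. *)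

theory Defs
  imports Main
begin

text \<open>Elements x_zeta of Q_{2p} are pairs (x, zeta) with x in {0..<p} and zeta a bool
  (False = 0, True = 1); 0_0 = (0, False).\<close>

definition Qset :: "int \<Rightarrow> (int \<times> bool) set" where
  "Qset p = {0..<p} \<times> UNIV"

definition zadd :: "int \<Rightarrow> int \<times> bool \<Rightarrow> int \<times> bool \<Rightarrow> int \<times> bool" where
  "zadd p a b = ((fst a + fst b) mod p, snd a \<noteq> snd b)"

definition dih :: "int \<Rightarrow> int \<times> bool \<Rightarrow> int \<times> bool \<Rightarrow> int \<times> bool" where
  "dih p a b = (((if snd b then - fst a else fst a) + fst b) mod p, snd a \<noteq> snd b)"

definition loopC :: "int \<Rightarrow> int \<times> bool \<Rightarrow> int \<times> bool \<Rightarrow> int \<times> bool" where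
  "loopC p a b = (((if snd b then - fst a else fst a) + fst b
                    + (if snd a \<and> snd b then 1 else 0)) mod p, snd a \<noteq> snd b)"

definition iter_op :: "('a \<Rightarrow> 'a \<Rightarrow> 'a) \<Rightarrow> 'a list \<Rightarrow> 'a" where
  "iter_op g xs = foldl g (hd xs) (tl xs)"

definition codeM :: "int \<Rightarrow> nat list \<Rightarrow> ((int \<times> bool) list \<Rightarrow> int \<times> bool) \<Rightarrow> (int \<times> bool) list set" where
  "codeM p ms f = {x # concat zs | x zs.
      length zs = length ms \<and>
      (\<forall>i<length ms. length (zs ! i) = ms ! i \<and> set (zs ! i) \<subseteq> Qset p) \<and>
      x = f (map (iter_op (dih p)) zs)}"

definition iso_apply :: "nat \<Rightarrow> (nat \<Rightarrow> 'a \<Rightarrow> 'a) \<Rightarrow> 'a list \<Rightarrow> 'a list" where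
  "iso_apply N \<tau> w = map (\<lambda>i. \<tau> i (w ! i)) [0..<N]"

definition isotopism :: "'a set \<Rightarrow> nat \<Rightarrow> (nat \<Rightarrow> 'a \<Rightarrow> 'a) \<Rightarrow> bool" where
  "isotopism Q N \<tau> \<longleftrightarrow> (\<forall>i<N. bij_betw (\<tau> i) Q Q)"

definition isotopically_transitive :: "'a set \<Rightarrow> nat \<Rightarrow> 'a list set \<Rightarrow> bool" where
  "isotopically_transitive Q N S \<longleftrightarrow>
     (\<forall>u\<in>S. \<forall>v\<in>S. \<exists>\<tau>. isotopism Q N \<tau> \<and> iso_apply N \<tau> ` S = S \<and> iso_apply N \<tau> u = v)"

end

theory Submission
  imports Defs
begin

definition e0 :: "int \<times> bool" where "e0 = (0, False)"
definition dinv :: "int \<Rightarrow> int \<times> bool \<Rightarrow> int \<times> bool" where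
  "dinv p a = (if snd a then fst a mod p else (- fst a) mod p, snd a)"
definition aut :: "int \<Rightarrow> int \<Rightarrow> int \<Rightarrow> int \<times> bool \<Rightarrow> int \<times> bool" where
  "aut p s t a = ((s * fst a + (if snd a then t else 0)) mod p, snd a)"

lemma mm1: "(a + b * (c mod p)) mod p = (a + b * c) mod (p::int)"
  by (metis mod_add_right_eq mod_mult_right_eq)
lemma mm2: "(a + (c mod p) * b) mod p = (a + c * b) mod (p::int)"
  by (metis mod_add_right_eq mod_mult_left_eq)
lemma mm3: "(b * (c mod p) + a) mod p = (b * c + a) mod (p::int)"
  by (metis mod_add_left_eq mod_mult_right_eq)
lemma dih_assoc: "dih p (dih p a b) c = dih p a (dih p b c)"
  by (cases a; cases b; cases c) (auto simp: dih_def mod_simps algebra_simps)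

lemma dih_inv_r: "dih p a (dinv p a) = e0"
  by (cases a) (auto simp: dih_def dinv_def e0_def mod_simps)
lemma dih_inv_l: "dih p (dinv p a) a = e0"
  by (cases a) (auto simp: dih_def dinv_def e0_def mod_simps)
lemma dih_e0_r: "dih p a e0 = (fst a mod p, snd a)"
  by (cases a) (auto simp: dih_def e0_def)
lemma dih_e0_l: "dih p e0 a = (fst a mod p, snd a)"
  by (cases a) (auto simp: dih_def e0_def)
lemma aut_hom: "aut p s t (dih p a b) = dih p (aut p s t a) (aut p s t b)"
  by (cases a; cases b) (auto simp: dih_def aut_def mod_simps mm1 mm2 algebra_simps)
lemma aut_inv: "s = 1 \<or> s = -1 \<Longrightarrow> aut p s (- (s * t)) (aut p s t a) = (fst a mod p, snd a)"
  by (cases a) (auto simp: aut_def mod_simps algebra_simps)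

lemma Q_mod: "p > 0 \<Longrightarrow> (x mod p, b) \<in> Qset p"
  by (simp add: Qset_def)
lemma Q_fix: "a \<in> Qset p \<Longrightarrow> (fst a mod p, snd a) = a"
  by (cases a) (auto simp: Qset_def)
lemma dih_Q: "p > 0 \<Longrightarrow> dih p a b \<in> Qset p"
  by (simp add: dih_def Qset_def)
lemma aut_Q: "p > 0 \<Longrightarrow> aut p s t a \<in> Qset p"
  by (simp add: aut_def Qset_def)
lemma dinv_Q: "p > 0 \<Longrightarrow> dinv p a \<in> Qset p"
  by (simp add: dinv_def Qset_def)
lemma e0_Q: "p > 0 \<Longrightarrow> e0 \<in> Qset p"
  by (simp add: e0_def Qset_def)

lemma aut_inv2: "s = 1 \<or> s = -1 \<Longrightarrow> aut p s t (aut p s (- (s * t)) a) = (fst a mod p, snd a)"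
  by (cases a) (auto simp: aut_def mod_simps algebra_simps)
lemma dih_modl[simp]: "dih p (fst a mod p, snd a) b = dih p a b"
  by (auto simp: dih_def mod_simps)
lemma dih_modr[simp]: "dih p b (fst a mod p, snd a) = dih p b a"
  by (auto simp: dih_def mod_simps)
lemma aut_mod[simp]: "aut p s t (fst a mod p, snd a) = aut p s t a"
  by (auto simp: aut_def mod_simps mm1 mm3)
lemma dih_cancel1[simp]: "dih p a (dih p (dinv p a) y) = (fst y mod p, snd y)"
  by (metis dih_assoc dih_inv_r dih_e0_l)
lemma dih_cancel2[simp]: "dih p (dinv p a) (dih p a y) = (fst y mod p, snd y)"
  by (metis dih_assoc dih_inv_l dih_e0_l)
lemma fst_mod_mod[simp]: "(fst (dih p a b) mod p) = fst (dih p a b)"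
  by (simp add: dih_def)
lemma fst_aut_mod[simp]: "(fst (aut p s t a) mod p) = fst (aut p s t a)"
  by (simp add: aut_def)

lemma bij_mult:
  assumes p: "p > 0" and s: "s = 1 \<or> s = -1"
  shows "bij_betw (\<lambda>z. dih p (dih p B (aut p s t z)) C) (Qset p) (Qset p)"
proof (rule bij_betw_byWitness[where f'="\<lambda>w. aut p s (- (s*t)) (dih p (dih p (dinv p B) w) (dinv p C))"])
  show "\<forall>a\<in>Qset p. aut p s (- (s * t)) (dih p (dih p (dinv p B) (dih p (dih p B (aut p s t a)) C)) (dinv p C)) = a"
    by (simp add: dih_assoc dih_inv_r aut_inv[OF s] Q_fix dih_e0_r)
  show "\<forall>a\<in>Qset p. dih p (dih p B (aut p s t (aut p s (- (s * t)) (dih p (dih p (dinv p B) a) (dinv p C))))) C = a"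
    by (simp add: dih_assoc dih_inv_l aut_inv2[OF s] Q_fix dih_e0_r)
  show "(\<lambda>z. dih p (dih p B (aut p s t z)) C) ` Qset p \<subseteq> Qset p" using p by (auto simp: dih_Q)
  show "(\<lambda>w. aut p s (- (s * t)) (dih p (dih p (dinv p B) w) (dinv p C))) ` Qset p \<subseteq> Qset p"
    using p by (auto simp: aut_Q)
qed

lemma iter_single[simp]: "iter_op g [x] = x" by (simp add: iter_op_def)
lemma iter_snoc: "xs \<noteq> [] \<Longrightarrow> iter_op g (xs @ [y]) = g (iter_op g xs) y"
  by (cases xs) (auto simp: iter_op_def)

lemma block:
  assumes p: "p > 0" and s: "s = 1 \<or> s = -1"
  shows "length us = Suc k \<Longrightarrow> length vs = Suc k \<Longrightarrow> set us \<subseteq> Qset p \<Longrightarrow> set vs \<subseteq> Qset p \<Longrightarrow>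
   \<exists>T A. A \<in> Qset p \<and> (\<forall>j<Suc k. bij_betw (T j) (Qset p) (Qset p)) \<and> (\<forall>j<Suc k. T j (us!j) = vs!j) \<and>
   (\<forall>zs. length zs = Suc k \<longrightarrow> set zs \<subseteq> Qset p \<longrightarrow>
      iter_op (dih p) (map (\<lambda>j. T j (zs!j)) [0..<Suc k]) = dih p (aut p s t (iter_op (dih p) zs)) A)"
proof (induction k arbitrary: us vs)
  case 0
  then obtain u v where uv: "us = [u]" "vs = [v]" by (metis length_0_conv length_Suc_conv)
  with 0 have uQ: "u \<in> Qset p" and vQ: "v \<in> Qset p" by auto
  define A where "A = dih p (dinv p (aut p s t u)) v"
  define T where "T = (\<lambda>(j::nat) z. dih p (dih p e0 (aut p s t z)) A)"
  show ?case
  proof (intro exI conjI allI impI)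
    show "A \<in> Qset p" using p by (simp add: A_def dih_Q)
    show "bij_betw (T j) (Qset p) (Qset p)" for j unfolding T_def using bij_mult[OF p s] by simp
    show "T j (us ! j) = vs ! j" if "j < Suc 0" for j
      using that vQ by (simp add: T_def A_def uv dih_assoc dih_e0_l Q_fix)
    show "iter_op (dih p) (map (\<lambda>j. T j (zs ! j)) [0..<Suc 0]) = dih p (aut p s t (iter_op (dih p) zs)) A"
      if "length zs = Suc 0" for zs
    proof -
      obtain z where "zs = [z]" using \<open>length zs = Suc 0\<close> by (metis length_0_conv length_Suc_conv)
      then show ?thesis by (simp add: T_def dih_e0_l)
    qed
  qed
next
  case (Suc k)
  obtain us' u where us: "us = us' @ [u]" using Suc.prems(1) by (metis length_Suc_conv_rev)
  obtain vs' v where vs: "vs = vs' @ [v]" using Suc.prems(2) by (metis length_Suc_conv_rev)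
  have l: "length us' = Suc k" "length vs' = Suc k" using Suc.prems us vs by auto
  have Q: "set us' \<subseteq> Qset p" "set vs' \<subseteq> Qset p" "u \<in> Qset p" "v \<in> Qset p"
    using Suc.prems us vs by auto
  obtain T A where A: "A \<in> Qset p" and Tb: "\<forall>j<Suc k. bij_betw (T j) (Qset p) (Qset p)"
    and Tuv: "\<forall>j<Suc k. T j (us'!j) = vs'!j"
    and Tit: "\<forall>zs. length zs = Suc k \<longrightarrow> set zs \<subseteq> Qset p \<longrightarrow>
      iter_op (dih p) (map (\<lambda>j. T j (zs!j)) [0..<Suc k]) = dih p (aut p s t (iter_op (dih p) zs)) A"
    using Suc.IH[OF l Q(1,2)] by blast
  define A' where "A' = dih p (dih p (dinv p (aut p s t u)) A) v"
  define T' where "T' = (\<lambda>j. if j < Suc k then T j else (\<lambda>z. dih p (dih p (dinv p A) (aut p s t z)) A'))"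
  show ?case
  proof (intro exI conjI allI impI)
    show "A' \<in> Qset p" using p by (simp add: A'_def dih_Q)
    show "bij_betw (T' j) (Qset p) (Qset p)" if "j < Suc (Suc k)" for j
      unfolding T'_def using bij_mult[OF p s] Tb by simp
    show "T' j (us ! j) = vs ! j" if "j < Suc (Suc k)" for j
    proof (cases "j < Suc k")
      case True then show ?thesis using Tuv l by (simp add: T'_def us vs nth_append)
    next
      case False
      then have "j = Suc k" using that by simp
      then show ?thesis using l Q by (simp add: T'_def us vs nth_append A'_def dih_assoc Q_fix)
    qed
    show "iter_op (dih p) (map (\<lambda>j. T' j (zs ! j)) [0..<Suc (Suc k)]) = dih p (aut p s t (iter_op (dih p) zs)) A'"
      if zl: "length zs = Suc (Suc k)" and zQ: "set zs \<subseteq> Qset p" for zs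
    proof -
      obtain zs' z where zs: "zs = zs' @ [z]" using zl by (metis length_Suc_conv_rev)
      have zl': "length zs' = Suc k" using zl zs by simp
      have zQ': "set zs' \<subseteq> Qset p" using zQ zs by simp
      have m: "map (\<lambda>j. T' j (zs ! j)) [0..<Suc (Suc k)] = map (\<lambda>j. T j (zs'!j)) [0..<Suc k] @ [T' (Suc k) z]"
        using zl' by (simp add: T'_def zs nth_append)
      have ne: "map (\<lambda>j. T j (zs'!j)) [0..<Suc k] \<noteq> []" by simp
      have ne2: "zs' \<noteq> []" using zl' by auto
      show ?thesis
        unfolding m iter_snoc[OF ne] using Tit zl' zQ'
        by (simp add: zs iter_snoc[OF ne2] T'_def aut_hom dih_assoc)
    qed
  qed
qed



fun locate :: "nat list \<Rightarrow> nat \<Rightarrow> nat \<times> nat" where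
  "locate [] k = (0, k)"
| "locate (m # ms) k = (if k < m then (0, k) else (case locate ms (k - m) of (i, j) \<Rightarrow> (Suc i, j)))"

lemma locate_bound: "k < sum_list ms \<Longrightarrow> fst (locate ms k) < length ms \<and> snd (locate ms k) < ms ! fst (locate ms k)"
proof (induction ms arbitrary: k)
  case Nil then show ?case by simp
next
  case (Cons m ms)
  show ?case
  proof (cases "k < m")
    case True then show ?thesis by simp
  next
    case False
    then have "k - m < sum_list ms" using Cons.prems by simp
    from Cons.IH[OF this] False show ?thesis by (auto split: prod.splits)
  qed
qed

definition blk :: "nat list \<Rightarrow> (nat \<Rightarrow> nat \<Rightarrow> 'a \<Rightarrow> 'a) \<Rightarrow> 'a list list \<Rightarrow> 'a list list" where
  "blk ms T zs = map (\<lambda>i. map (\<lambda>j. T i j (zs!i!j)) [0..<ms!i]) [0..<length ms]"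

lemma locate_map:
  "length zs = length ms \<Longrightarrow> (\<forall>i<length ms. length (zs!i) = ms!i) \<Longrightarrow>
   map (\<lambda>k. G (locate ms k) (concat zs ! k)) [0..<sum_list ms]
   = concat (map (\<lambda>i. map (\<lambda>j. G (i,j) (zs!i!j)) [0..<ms!i]) [0..<length ms])"
proof (induction ms arbitrary: zs G)
  case Nil then show ?case by simp
next
  case (Cons m ms)
  obtain z zs' where zs: "zs = z # zs'" using Cons.prems(1) by (cases zs) auto
  have lz: "length z = m" using Cons.prems(2) zs by force
  have l': "length zs' = length ms" "\<forall>i<length ms. length (zs'!i) = ms!i"
    using Cons.prems zs by auto
  have IH: "map (\<lambda>k. G (Suc (fst (locate ms k)), snd (locate ms k)) (concat zs' ! k)) [0..<sum_list ms]
   = concat (map (\<lambda>i. map (\<lambda>j. G (Suc i,j) (zs'!i!j)) [0..<ms!i]) [0..<length ms])"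
    using Cons.IH[OF l', of "\<lambda>(i,j). G (Suc i, j)"] by (simp add: case_prod_beta)
  have "[0..<sum_list (m # ms)] = [0..<m] @ map (\<lambda>k. k + m) [0..<sum_list ms]"
    by (simp add: map_add_upt upt_add_eq_append[of 0 m, simplified] add.commute)
  then have "map (\<lambda>k. G (locate (m # ms) k) (concat zs ! k)) [0..<sum_list (m # ms)]
     = map (\<lambda>j. G (0, j) (z ! j)) [0..<m] @
       map (\<lambda>k. G (Suc (fst (locate ms k)), snd (locate ms k)) (concat zs' ! k)) [0..<sum_list ms]"
    using lz by (auto simp: zs nth_append split: prod.splits)
  also have "\<dots> = concat (map (\<lambda>i. map (\<lambda>j. G (i,j) (zs!i!j)) [0..<(m#ms)!i]) [0..<length (m#ms)])"
    unfolding IH by (simp add: zs upt_conv_Cons map_Suc_upt[symmetric] comp_def del: upt_Suc)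
  finally show ?case .
qed

definition valid :: "int \<Rightarrow> nat list \<Rightarrow> (int \<times> bool) list list \<Rightarrow> bool" where
  "valid p ms zs \<longleftrightarrow> length zs = length ms \<and> (\<forall>i<length ms. length (zs!i) = ms!i \<and> set (zs!i) \<subseteq> Qset p)"

lemma codeM_alt: "codeM p ms f = {x # concat zs | x zs. valid p ms zs \<and> x = f (map (iter_op (dih p)) zs)}"
  unfolding codeM_def valid_def by blast

lemma valid_len: "valid p ms zs \<Longrightarrow> length (concat zs) = sum_list ms"
proof -
  assume v: "valid p ms zs"
  have "map length zs = ms" using v unfolding valid_def by (auto intro: nth_equalityI)
  then show ?thesis by (simp add: length_concat)
qed

lemma valid_set: "valid p ms zs \<Longrightarrow> set (concat zs) \<subseteq> Qset p"
  unfolding valid_def by (auto simp: in_set_conv_nth) (metis nth_mem subsetD)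

lemma finite_Q: "finite (Qset p)"
  unfolding Qset_def by simp

lemma outer:
  fixes T :: "nat \<Rightarrow> nat \<Rightarrow> int \<times> bool \<Rightarrow> int \<times> bool"
  assumes p: "p > 0"
    and fQ: "\<forall>zs. valid p ms zs \<longrightarrow> f (map (iter_op (dih p)) zs) \<in> Qset p"
    and vu: "valid p ms zu" and vv: "valid p ms zv"
    and Tb: "\<forall>i<length ms. \<forall>j<ms!i. bij_betw (T i j) (Qset p) (Qset p)"
    and gb: "bij_betw \<gamma> (Qset p) (Qset p)"
    and Tuv: "\<forall>i<length ms. \<forall>j<ms!i. T i j (zu!i!j) = zv!i!j"
    and ge: "\<forall>zs. valid p ms zs \<longrightarrow> \<gamma> (f (map (iter_op (dih p)) zs)) = f (map (iter_op (dih p)) (blk ms T zs))"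
  shows "\<exists>\<tau>. isotopism (Qset p) (1 + sum_list ms) \<tau> \<and>
     iso_apply (1 + sum_list ms) \<tau> ` codeM p ms f = codeM p ms f \<and>
     iso_apply (1 + sum_list ms) \<tau> (f (map (iter_op (dih p)) zu) # concat zu) = f (map (iter_op (dih p)) zv) # concat zv"
proof -
  let ?Q = "Qset p" and ?N = "1 + sum_list ms" and ?S = "codeM p ms f" and ?it = "iter_op (dih p)"
  define \<tau> where "\<tau> = (\<lambda>k. if k = 0 then \<gamma> else (case locate ms (k - 1) of (i, j) \<Rightarrow> T i j))"
  have iso_eq: "iso_apply ?N \<tau> (x # concat zs) = \<gamma> x # concat (blk ms T zs)" if v: "valid p ms zs" for x zs
  proof -
    have "[0..<?N] = 0 # map Suc [0..<sum_list ms]"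
      by (simp add: upt_conv_Cons map_Suc_upt del: upt_Suc)
    then have "iso_apply ?N \<tau> (x # concat zs) = \<gamma> x # map (\<lambda>k. (\<lambda>ij. case ij of (i,j) \<Rightarrow> T i j) (locate ms k) (concat zs ! k)) [0..<sum_list ms]"
      by (simp add: iso_apply_def \<tau>_def)
    also have "\<dots> = \<gamma> x # concat (blk ms T zs)"
      using v unfolding valid_def blk_def by (subst locate_map) auto
    finally show ?thesis .
  qed
  have blk_valid: "valid p ms (blk ms T zs)" if v: "valid p ms zs" for zs
  proof -
    have "T i j (zs!i!j) \<in> ?Q" if "i < length ms" "j < ms!i" for i j
    proof -
      have "zs!i!j \<in> ?Q" using v that unfolding valid_def by (metis nth_mem subsetD)
      then show ?thesis using Tb that bij_betw_apply by metis
    qed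
    then show ?thesis using v unfolding valid_def blk_def by auto
  qed
  have tau_bij: "bij_betw (\<tau> k) ?Q ?Q" if "k < ?N" for k
  proof (cases "k = 0")
    case True then show ?thesis using gb by (simp add: \<tau>_def)
  next
    case False
    then have "k - 1 < sum_list ms" using that by simp
    from locate_bound[OF this] Tb False show ?thesis
      by (auto simp: \<tau>_def split: prod.splits)
  qed
  have SQ: "length w = ?N \<and> set w \<subseteq> ?Q" if wS: "w \<in> ?S" for w
  proof -
    obtain x zs where w: "w = x # concat zs" and v: "valid p ms zs" and x: "x = f (map ?it zs)"
      using wS unfolding codeM_alt by blast
    show ?thesis using valid_len[OF v] valid_set[OF v] fQ v x w by auto
  qed
  have sub: "iso_apply ?N \<tau> ` ?S \<subseteq> ?S"
  proof
    fix w assume "w \<in> iso_apply ?N \<tau> ` ?S"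
    then obtain x zs where w: "w = iso_apply ?N \<tau> (x # concat zs)" and v: "valid p ms zs"
      and x: "x = f (map ?it zs)" unfolding codeM_alt by auto
    show "w \<in> ?S" unfolding codeM_alt w iso_eq[OF v] using blk_valid[OF v] ge v x by blast
  qed
  have inj: "inj_on (iso_apply ?N \<tau>) ?S"
  proof (rule inj_onI)
    fix w1 w2 assume w1: "w1 \<in> ?S" and w2: "w2 \<in> ?S" and eq: "iso_apply ?N \<tau> w1 = iso_apply ?N \<tau> w2"
    show "w1 = w2"
    proof (rule nth_equalityI)
      show "length w1 = length w2" using SQ w1 w2 by simp
      fix k assume "k < length w1"
      then have k: "k < ?N" using SQ w1 by simp
      have "\<tau> k (w1 ! k) = \<tau> k (w2 ! k)"
        using eq k unfolding iso_apply_def by (metis (no_types, lifting) add_0 diff_zero nth_map_upt)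
      moreover have "w1 ! k \<in> ?Q" using SQ[OF w1] k nth_mem by (metis subsetD)
      moreover have "w2 ! k \<in> ?Q" using SQ[OF w2] k nth_mem by (metis subsetD)
      ultimately show "w1 ! k = w2 ! k" using tau_bij[OF k] by (auto dest: bij_betw_imp_inj_on inj_onD)
    qed
  qed
  have fin: "finite ?S"
  proof (rule finite_subset)
    show "?S \<subseteq> {w. set w \<subseteq> ?Q \<and> length w = ?N}" using SQ by auto
    show "finite {w. set w \<subseteq> ?Q \<and> length w = ?N}" using finite_lists_length_eq[OF finite_Q] by simp
  qed
  have img: "iso_apply ?N \<tau> ` ?S = ?S" using endo_inj_surj[OF fin sub inj] .
  have bzu: "blk ms T zu = zv"
    using vu vv Tuv unfolding valid_def blk_def by (auto intro!: nth_equalityI)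
  have isot: "isotopism ?Q ?N \<tau>" unfolding isotopism_def using tau_bij by blast
  have "iso_apply ?N \<tau> (f (map ?it zu) # concat zu) = f (map ?it zv) # concat zv"
    using iso_eq[OF vu] ge vu bzu by metis
  then show ?thesis
    using isot img by blast
qed



definition sg :: "bool \<Rightarrow> int" where "sg e = (if e then -1 else 1)"
definition ind :: "bool \<Rightarrow> int" where "ind e = (if e then 1 else 0)"

definition lgam :: "int \<Rightarrow> int \<times> bool \<Rightarrow> int \<times> bool \<Rightarrow> int \<times> bool \<Rightarrow> int \<times> bool" where
  "lgam p A0 A1 y = (let c1 = fst A0; e1 = snd A0; c2 = fst A1; e2 = snd A1;
      t2 = 2 * c1 + sg e2 * (ind e2 - ind e1); \<tau>2 = sg e2 * t2;
      \<phi>0 = sg e2 * c1 + c2 + ind e1 * ind e2;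
      \<phi>1 = - sg e2 * c1 + \<tau>2 + c2 + ind e1 * (1 - ind e2)
   in ((sg e1 * fst y + (if snd y then \<phi>1 else \<phi>0)) mod p, snd y \<noteq> (e1 \<noteq> e2)))"

lemma t1: "(c - x mod p + (d::int)) mod p = (c - x + d) mod p"
  by (metis add.commute add_diff_eq mod_add_right_eq mod_diff_right_eq)
lemma t2: "(x mod p - c + (d::int)) mod p = (x - c + d) mod p"
  by (metis add_diff_eq diff_add_eq mod_add_left_eq mod_diff_left_eq)
lemma dih_aut_eq: "dih p (aut p s t a) A =
  (((if snd A then - (s * fst a + (if snd a then t else 0)) else s * fst a + (if snd a then t else 0)) + fst A) mod p,
   snd a \<noteq> snd A)"
  by (auto simp: dih_def aut_def mod_simps algebra_simps)
lemma loopC_modl: "loopC p (x mod p, e) b = loopC p (x, e) b"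
  by (auto simp: loopC_def mod_simps t1 t2)
lemma loopC_modr: "loopC p a (x mod p, e) = loopC p a (x, e)"
  by (auto simp: loopC_def mod_simps t1 t2)
lemma lgam_mod: "lgam p A0 A1 (x mod p, e) = lgam p A0 A1 (x, e)"
  by (auto simp: lgam_def Let_def mod_simps mm3)

lemma loop_id:
  "lgam p A0 A1 (loopC p a b) =
   loopC p (dih p (aut p (sg (snd A1)) 0 a) A0)
           (dih p (aut p (sg (snd A0) * sg (snd A1)) (2 * fst A0 + sg (snd A1) * (ind (snd A1) - ind (snd A0))) b) A1)"
  apply (simp only: dih_aut_eq loopC_modl loopC_modr)
  apply (simp only: loopC_def lgam_mod)
  apply (cases a; cases b; cases A0; cases A1)
  apply (auto simp: lgam_def sg_def ind_def Let_def algebra_simps)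
  done

lemma mm5: "(b * (c mod p) - a) mod p = (b * c - a) mod (p::int)"
  by (metis mod_diff_left_eq mod_mult_right_eq)

lemma bx1: "((a = (\<not> b)) = (\<not> b)) = (a::bool)" by blast
lemma bx2: "((a \<noteq> b) \<noteq> b) = (a::bool)" by blast

lemma bij_affine:
  assumes p: "p > 0" and s: "\<sigma> = 1 \<or> \<sigma> = -1"
  shows "bij_betw (\<lambda>y. ((\<sigma> * fst y + F (snd y)) mod p, snd y \<noteq> E)) (Qset p) (Qset p)"
proof (rule bij_betw_byWitness[where f'="\<lambda>w. ((\<sigma> * fst w - \<sigma> * F (snd w \<noteq> E)) mod p, snd w \<noteq> E)"])
  have ss: "\<sigma> * \<sigma> = 1" using s by auto
  have e1: "(\<sigma> * ((\<sigma> * x + c) mod p) - \<sigma> * c) mod p = x mod p" for x c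
  proof -
    have "(\<sigma> * ((\<sigma> * x + c) mod p) - \<sigma> * c) mod p = (\<sigma> * (\<sigma> * x + c) - \<sigma> * c) mod p" by (rule mm5)
    also have "\<sigma> * (\<sigma> * x + c) - \<sigma> * c = (\<sigma> * \<sigma>) * x" by (simp add: algebra_simps)
    finally show ?thesis using ss by simp
  qed
  have e2: "(\<sigma> * ((\<sigma> * x - \<sigma> * c) mod p) + c) mod p = x mod p" for x c
  proof -
    have "(\<sigma> * ((\<sigma> * x - \<sigma> * c) mod p) + c) mod p = (\<sigma> * (\<sigma> * x - \<sigma> * c) + c) mod p" by (rule mm3)
    also have "\<sigma> * (\<sigma> * x - \<sigma> * c) + c = (\<sigma> * \<sigma>) * x + (1 - \<sigma> * \<sigma>) * c" by (simp add: algebra_simps)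
    finally show ?thesis using ss by simp
  qed
  show "\<forall>a\<in>Qset p. ((\<sigma> * fst ((\<sigma> * fst a + F (snd a)) mod p, snd a \<noteq> E) - \<sigma> * F (snd ((\<sigma> * fst a + F (snd a)) mod p, snd a \<noteq> E) \<noteq> E)) mod p,
          snd ((\<sigma> * fst a + F (snd a)) mod p, snd a \<noteq> E) \<noteq> E) = a"
    using e1 by (auto simp: Qset_def bx1 bx2)
  show "\<forall>a\<in>Qset p. ((\<sigma> * fst ((\<sigma> * fst a - \<sigma> * F (snd a \<noteq> E)) mod p, snd a \<noteq> E) + F (snd ((\<sigma> * fst a - \<sigma> * F (snd a \<noteq> E)) mod p, snd a \<noteq> E))) mod p,
          snd ((\<sigma> * fst a - \<sigma> * F (snd a \<noteq> E)) mod p, snd a \<noteq> E) \<noteq> E) = a"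
    using e2 by (auto simp: Qset_def bx1 bx2)
  show "(\<lambda>y. ((\<sigma> * fst y + F (snd y)) mod p, snd y \<noteq> E)) ` Qset p \<subseteq> Qset p" using p by (auto simp: Qset_def)
  show "(\<lambda>w. ((\<sigma> * fst w - \<sigma> * F (snd w \<noteq> E)) mod p, snd w \<noteq> E)) ` Qset p \<subseteq> Qset p" using p by (auto simp: Qset_def)
qed

lemma lgam_bij: "p > 0 \<Longrightarrow> bij_betw (lgam p A0 A1) (Qset p) (Qset p)"
proof -
  assume p: "p > 0"
  let ?c1 = "fst A0" and ?e1 = "snd A0" and ?c2 = "fst A1" and ?e2 = "snd A1"
  let ?F = "\<lambda>\<eta>. if \<eta> then - sg ?e2 * ?c1 + sg ?e2 * (2 * ?c1 + sg ?e2 * (ind ?e2 - ind ?e1)) + ?c2 + ind ?e1 * (1 - ind ?e2)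
     else sg ?e2 * ?c1 + ?c2 + ind ?e1 * ind ?e2"
  have eq: "lgam p A0 A1 = (\<lambda>y. ((sg ?e1 * fst y + ?F (snd y)) mod p, snd y \<noteq> (?e1 \<noteq> ?e2)))"
    by (rule ext) (simp add: lgam_def Let_def)
  have s1: "sg ?e1 = 1 \<or> sg ?e1 = -1" by (simp add: sg_def)
  show ?thesis unfolding eq by (rule bij_affine[OF p s1])
qed

lemma zadd_Q: "p > 0 \<Longrightarrow> zadd p a b \<in> Qset p" by (simp add: zadd_def Qset_def)
lemma zadd_dih: "dih p (aut p (sg (snd A)) 0 h) A = zadd p h A"
proof (cases h; cases A)
  fix a b c d assume h: "h = (a, b)" and A: "A = (c, d)"
  show ?thesis
  proof (cases d)
    case True
    then show ?thesis using h A by (simp add: dih_def aut_def zadd_def sg_def mod_simps t1 add.commute[of c a])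
  next
    case False
    then show ?thesis using h A by (simp add: dih_def aut_def zadd_def sg_def mod_simps)
  qed
qed

lemma zadd_swap: "zadd p (zadd p x y) (zadd p a b) = zadd p (zadd p x a) (zadd p y b)"
proof -
  have "((fst x + fst y) mod p + (fst a + fst b) mod p) mod p = ((fst x + fst a) mod p + (fst y + fst b) mod p) mod p"
    by (simp only: mod_add_eq) (simp add: ac_simps)
  moreover have "((snd x \<noteq> snd y) \<noteq> (snd a \<noteq> snd b)) = ((snd x \<noteq> snd a) \<noteq> (snd y \<noteq> snd b))" by blast
  ultimately show ?thesis by (simp add: zadd_def)
qed
lemma zadd_bij: "p > 0 \<Longrightarrow> bij_betw (\<lambda>y. zadd p y B) (Qset p) (Qset p)"
proof (rule bij_betw_byWitness[where f'="\<lambda>w. zadd p w (- fst B, snd B)"])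
  assume p: "p > 0"
  show "\<forall>a\<in>Qset p. zadd p (zadd p a B) (- fst B, snd B) = a"
    by (auto simp: zadd_def Qset_def mod_simps)
  show "\<forall>a\<in>Qset p. zadd p (zadd p a (- fst B, snd B)) B = a"
    by (auto simp: zadd_def Qset_def mod_simps)
  show "(\<lambda>y. zadd p y B) ` Qset p \<subseteq> Qset p" using p by (auto simp: zadd_def Qset_def)
  show "(\<lambda>w. zadd p w (- fst B, snd B)) ` Qset p \<subseteq> Qset p" using p by (auto simp: zadd_def Qset_def)
qed

lemma iter_zadd_map:
  "iter_op (zadd p) (map (\<lambda>i. zadd p (F i) (G i)) [0..<Suc n]) =
   zadd p (iter_op (zadd p) (map F [0..<Suc n])) (iter_op (zadd p) (map G [0..<Suc n]))"
proof (induction n)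
  case 0 then show ?case by simp
next
  case (Suc n)
  have ne: "map H [0..<Suc n] \<noteq> []" for H :: "nat \<Rightarrow> int \<times> bool" by simp
  have "[0..<Suc (Suc n)] = [0..<Suc n] @ [Suc n]" by simp
  then show ?case
    by (simp only: map_append list.map iter_snoc[OF ne] Suc.IH zadd_swap)
qed


lemma foldl_zadd_Q: "p > 0 \<Longrightarrow> foldl (zadd p) (zadd p a b) xs \<in> Qset p"
  by (induction xs arbitrary: a b) (auto simp: zadd_Q)

lemma foldl_dih_Q: "p > 0 \<Longrightarrow> a \<in> Qset p \<Longrightarrow> set xs \<subseteq> Qset p \<Longrightarrow> foldl (dih p) a xs \<in> Qset p"
  by (induction xs arbitrary: a) (auto simp: dih_Q)

lemma iter_dih_Q: "p > 0 \<Longrightarrow> xs \<noteq> [] \<Longrightarrow> set xs \<subseteq> Qset p \<Longrightarrow> iter_op (dih p) xs \<in> Qset p"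
  by (cases xs) (auto simp: iter_op_def foldl_dih_Q)

lemma block2:
  assumes p: "p > 0" and s: "s = 1 \<or> s = -1" and l: "length us = m" "length vs = m" "m \<ge> 1"
    and Q: "set us \<subseteq> Qset p" "set vs \<subseteq> Qset p"
  shows "\<exists>T A. A \<in> Qset p \<and> (\<forall>j<m. bij_betw (T j) (Qset p) (Qset p)) \<and> (\<forall>j<m. T j (us!j) = vs!j) \<and>
   (\<forall>zs. length zs = m \<longrightarrow> set zs \<subseteq> Qset p \<longrightarrow>
      iter_op (dih p) (map (\<lambda>j. T j (zs!j)) [0..<m]) = dih p (aut p s t (iter_op (dih p) zs)) A) \<and>
   iter_op (dih p) vs = dih p (aut p s t (iter_op (dih p) us)) A"
proof -
  obtain k where m: "m = Suc k" using l(3) by (cases m) auto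
  obtain T A where A: "A \<in> Qset p" and b: "\<forall>j<m. bij_betw (T j) (Qset p) (Qset p)"
    and uv: "\<forall>j<m. T j (us!j) = vs!j"
    and it: "\<forall>zs. length zs = m \<longrightarrow> set zs \<subseteq> Qset p \<longrightarrow>
      iter_op (dih p) (map (\<lambda>j. T j (zs!j)) [0..<m]) = dih p (aut p s t (iter_op (dih p) zs)) A"
    using block[OF p s, of us k vs t] l Q unfolding m by blast
  have "map (\<lambda>j. T j (us!j)) [0..<m] = vs" using uv l by (auto intro: nth_equalityI)
  then have "iter_op (dih p) vs = dih p (aut p s t (iter_op (dih p) us)) A" using it l Q by metis
  then show ?thesis using A b uv it by blast
qed



lemma iter_zadd_Q: "p > 0 \<Longrightarrow> length xs \<ge> 2 \<Longrightarrow> iter_op (zadd p) xs \<in> Qset p"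
proof (cases xs)
  case Nil
  assume "length xs \<ge> 2" then show ?thesis using Nil by simp
next
  case (Cons a r)
  assume "p > 0" "length xs \<ge> 2"
  then show ?thesis using Cons by (cases r) (auto simp: iter_op_def foldl_zadd_Q)
qed

lemma choice2: "\<forall>i<(n::nat). \<exists>x y. P i x y \<Longrightarrow> \<exists>X Y. \<forall>i<n. P i (X i) (Y i)"
  by metis

theorem theorem1:
  fixes p :: int and ms :: "nat list" and f :: "(int \<times> bool) list \<Rightarrow> int \<times> bool"
  assumes "p \<ge> 2"
    and "\<forall>i<length ms. ms ! i \<ge> 1"
    and "(length ms = 2 \<and> f = (\<lambda>ys. loopC p (ys ! 0) (ys ! 1)))
         \<or> (length ms \<ge> 2 \<and> f = iter_op (zadd p))"
  shows "isotopically_transitive (Qset p) (1 + sum_list ms) (codeM p ms f)"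
proof -
  have p: "p > 0" using assms(1) by simp
  note ms1 = assms(2)
  let ?Q = "Qset p" and ?it = "iter_op (dih p)" and ?n = "length ms"
  have hQ: "?it (zs!i) \<in> ?Q" if "valid p ms zs" "i < ?n" for zs i
  proof -
    have "length (zs!i) \<ge> 1" "set (zs!i) \<subseteq> ?Q" using that ms1 unfolding valid_def by auto
    then have "zs!i \<noteq> []" "set (zs!i) \<subseteq> ?Q" by auto
    then show ?thesis by (rule iter_dih_Q[OF p])
  qed
  have fQ: "\<forall>zs. valid p ms zs \<longrightarrow> f (map ?it zs) \<in> ?Q"
  proof (intro allI impI)
    fix zs assume v: "valid p ms zs"
    show "f (map ?it zs) \<in> ?Q"
      using assms(3)
    proof
      assume "length ms = 2 \<and> f = (\<lambda>ys. loopC p (ys ! 0) (ys ! 1))"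
      then show ?thesis using p by (auto simp: loopC_def Qset_def)
    next
      assume a: "2 \<le> length ms \<and> f = iter_op (zadd p)"
      have "length (map ?it zs) = length ms" using v unfolding valid_def by simp
      then have "length (map ?it zs) \<ge> 2" using a by simp
      then show ?thesis using a iter_zadd_Q[OF p] by simp
    qed
  qed
  show ?thesis unfolding isotopically_transitive_def
  proof (intro ballI)
    fix u v assume uS: "u \<in> codeM p ms f" and vS: "v \<in> codeM p ms f"
    obtain zu where u: "u = f (map ?it zu) # concat zu" and vu: "valid p ms zu"
      using uS unfolding codeM_alt by blast
    obtain zv where v: "v = f (map ?it zv) # concat zv" and vv: "valid p ms zv"
      using vS unfolding codeM_alt by blast
    have blocks: "\<exists>T A. A \<in> ?Q \<and> (\<forall>j<ms!i. bij_betw (T j) ?Q ?Q) \<and> (\<forall>j<ms!i. T j (zu!i!j) = zv!i!j) \<and>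
      (\<forall>zs. length zs = ms!i \<longrightarrow> set zs \<subseteq> ?Q \<longrightarrow>
         ?it (map (\<lambda>j. T j (zs!j)) [0..<ms!i]) = dih p (aut p s t (?it zs)) A) \<and>
      ?it (zv!i) = dih p (aut p s t (?it (zu!i))) A"
      if "i < ?n" "s = 1 \<or> s = -1" for i s t
    proof -
      have "length (zu!i) = ms!i" "length (zv!i) = ms!i" "ms!i \<ge> 1" "set (zu!i) \<subseteq> ?Q" "set (zv!i) \<subseteq> ?Q"
        using vu vv ms1 that(1) unfolding valid_def by auto
      then show ?thesis by (rule block2[OF p that(2)])
    qed
    have snd_A: "snd A = (snd (?it (zu!i)) \<noteq> snd (?it (zv!i)))"
      if "?it (zv!i) = dih p (aut p s t (?it (zu!i))) A" for i s t A
      using that by (auto simp: dih_def aut_def)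
    have bT: "\<forall>zs. valid p ms zs \<longrightarrow> (\<forall>i<?n. length (zs!i) = ms!i \<and> set (zs!i) \<subseteq> ?Q)"
      unfolding valid_def by blast
    show "\<exists>\<tau>. isotopism ?Q (1 + sum_list ms) \<tau> \<and>
         iso_apply (1 + sum_list ms) \<tau> ` codeM p ms f = codeM p ms f \<and> iso_apply (1 + sum_list ms) \<tau> u = v"
      using assms(3)
    proof
      assume a: "length ms = 2 \<and> f = (\<lambda>ys. loopC p (ys ! 0) (ys ! 1))"
      define e1 where "e1 = (snd (?it (zu!0)) \<noteq> snd (?it (zv!0)))"
      define e2 where "e2 = (snd (?it (zu!1)) \<noteq> snd (?it (zv!1)))"
      have i0: "0 < ?n" and i1: "1 < ?n" using a by auto
      have sg2: "sg e2 = 1 \<or> sg e2 = -1" and sg12: "sg e1 * sg e2 = 1 \<or> sg e1 * sg e2 = -1"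
        by (auto simp: sg_def)
      obtain T0 A0 where A0: "A0 \<in> ?Q" and b0: "\<forall>j<ms!0. bij_betw (T0 j) ?Q ?Q"
        and uv0: "\<forall>j<ms!0. T0 j (zu!0!j) = zv!0!j"
        and it0: "\<forall>zs. length zs = ms!0 \<longrightarrow> set zs \<subseteq> ?Q \<longrightarrow>
         ?it (map (\<lambda>j. T0 j (zs!j)) [0..<ms!0]) = dih p (aut p (sg e2) 0 (?it zs)) A0"
        and h0: "?it (zv!0) = dih p (aut p (sg e2) 0 (?it (zu!0))) A0"
        using blocks[OF i0 sg2] by blast
      have se1: "snd A0 = e1" using snd_A[OF h0] by (simp add: e1_def)
      define t2 where "t2 = 2 * fst A0 + sg e2 * (ind e2 - ind e1)"
      obtain T1 A1 where A1: "A1 \<in> ?Q" and b1: "\<forall>j<ms!1. bij_betw (T1 j) ?Q ?Q"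
        and uv1: "\<forall>j<ms!1. T1 j (zu!1!j) = zv!1!j"
        and it1: "\<forall>zs. length zs = ms!1 \<longrightarrow> set zs \<subseteq> ?Q \<longrightarrow>
         ?it (map (\<lambda>j. T1 j (zs!j)) [0..<ms!1]) = dih p (aut p (sg e1 * sg e2) t2 (?it zs)) A1"
        and h1: "?it (zv!1) = dih p (aut p (sg e1 * sg e2) t2 (?it (zu!1))) A1"
        using blocks[OF i1 sg12] by blast
      have se2: "snd A1 = e2" using snd_A[OF h1] by (simp add: e2_def)
      define TT where "TT = (\<lambda>i::nat. if i = 0 then T0 else T1)"
      have lt: "i < ?n \<longleftrightarrow> i = 0 \<or> i = 1" for i using a by auto
      show ?thesis
      proof (subst u, subst v, rule outer[OF p fQ vu vv, where T = TT and \<gamma> = "lgam p A0 A1"])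
        show "\<forall>i<?n. \<forall>j<ms!i. bij_betw (TT i j) ?Q ?Q" using b0 b1 lt by (auto simp: TT_def)
        show "bij_betw (lgam p A0 A1) ?Q ?Q" by (rule lgam_bij[OF p])
        show "\<forall>i<?n. \<forall>j<ms!i. TT i j (zu!i!j) = zv!i!j" using uv0 uv1 lt by (auto simp: TT_def)
        show "\<forall>zs. valid p ms zs \<longrightarrow> lgam p A0 A1 (f (map ?it zs)) = f (map ?it (blk ms TT zs))"
        proof (intro allI impI)
          fix zs assume vz: "valid p ms zs"
          have l: "length zs = 2" using vz a unfolding valid_def by simp
          have z0: "length (zs!0) = ms!0" "set (zs!0) \<subseteq> ?Q" and z1: "length (zs!1) = ms!1" "set (zs!1) \<subseteq> ?Q"
            using bT vz a by auto
          have "map ?it (blk ms TT zs) ! 0 = dih p (aut p (sg (snd A1)) 0 (?it (zs!0))) A0"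
            using it0 z0 a se2 by (simp add: blk_def TT_def)
          moreover have "map ?it (blk ms TT zs) ! 1 = dih p (aut p (sg (snd A0) * sg (snd A1)) (2 * fst A0 + sg (snd A1) * (ind (snd A1) - ind (snd A0))) (?it (zs!1))) A1"
            using it1 z1 a se1 se2 by (simp add: blk_def TT_def t2_def)
          ultimately show "lgam p A0 A1 (f (map ?it zs)) = f (map ?it (blk ms TT zs))"
            using a l loop_id by simp
        qed
      qed
    next
      assume a: "2 \<le> length ms \<and> f = iter_op (zadd p)"
      define sg_i where "sg_i = (\<lambda>i. sg (snd (?it (zu!i)) \<noteq> snd (?it (zv!i))))"
      define P where "P = (\<lambda>i T A. A \<in> ?Q \<and> (\<forall>j<ms!i. bij_betw (T j) ?Q ?Q) \<and> (\<forall>j<ms!i. T j (zu!i!j) = zv!i!j) \<and>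
      (\<forall>zs. length zs = ms!i \<longrightarrow> set zs \<subseteq> ?Q \<longrightarrow>
         ?it (map (\<lambda>j. T j (zs!j)) [0..<ms!i]) = dih p (aut p (sg_i i) 0 (?it zs)) A) \<and>
      ?it (zv!i) = dih p (aut p (sg_i i) 0 (?it (zu!i))) A)"
      have ex: "\<forall>i<?n. \<exists>T A. P i T A"
      proof (intro allI impI)
        fix i assume i: "i < ?n"
        have "sg_i i = 1 \<or> sg_i i = -1" by (simp add: sg_i_def sg_def)
        from blocks[OF i this] show "\<exists>T A. P i T A" unfolding P_def .
      qed
      obtain TT AA where TA: "\<forall>i<?n. P i (TT i) (AA i)" using choice2[OF ex] by blast
      have TA1: "\<And>i j. i < ?n \<Longrightarrow> j < ms!i \<Longrightarrow> bij_betw (TT i j) ?Q ?Q"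
        using TA unfolding P_def by blast
      have TA2: "\<And>i j. i < ?n \<Longrightarrow> j < ms!i \<Longrightarrow> TT i j (zu!i!j) = zv!i!j"
        using TA unfolding P_def by blast
      have TA3: "\<And>i zs. i < ?n \<Longrightarrow> length zs = ms!i \<Longrightarrow> set zs \<subseteq> ?Q \<Longrightarrow>
         ?it (map (\<lambda>j. TT i j (zs!j)) [0..<ms!i]) = dih p (aut p (sg_i i) 0 (?it zs)) (AA i)"
        using TA unfolding P_def by blast
      have TA4: "\<And>i. i < ?n \<Longrightarrow> ?it (zv!i) = dih p (aut p (sg_i i) 0 (?it (zu!i))) (AA i)"
        using TA unfolding P_def by blast
      have sgA: "sg_i i = sg (snd (AA i))" if "i < ?n" for i
        using snd_A[OF TA4[OF that]] by (simp add: sg_i_def)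
      define B where "B = iter_op (zadd p) (map AA [0..<?n])"
      obtain n' where n': "?n = Suc n'" using a by (cases ?n) auto
      show ?thesis
      proof (subst u, subst v, rule outer[OF p fQ vu vv, where T = TT and \<gamma> = "\<lambda>y. zadd p y B"])
        show "\<forall>i<?n. \<forall>j<ms!i. bij_betw (TT i j) ?Q ?Q" using TA1 by blast
        show "bij_betw (\<lambda>y. zadd p y B) ?Q ?Q" by (rule zadd_bij[OF p])
        show "\<forall>i<?n. \<forall>j<ms!i. TT i j (zu!i!j) = zv!i!j" using TA2 by blast
        show "\<forall>zs. valid p ms zs \<longrightarrow> zadd p (f (map ?it zs)) B = f (map ?it (blk ms TT zs))"
        proof (intro allI impI)
          fix zs assume vz: "valid p ms zs"
          have l: "length zs = ?n" using vz unfolding valid_def by simp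
          have m1: "map ?it zs = map (\<lambda>i. ?it (zs!i)) [0..<?n]"
            by (rule nth_equalityI) (auto simp: l)
          have m2: "map ?it (blk ms TT zs) = map (\<lambda>i. zadd p (?it (zs!i)) (AA i)) [0..<?n]"
          proof -
            have "?it (map (\<lambda>j. TT i j (zs!i!j)) [0..<ms!i]) = zadd p (?it (zs!i)) (AA i)" if i: "i < ?n" for i
            proof -
              have "length (zs!i) = ms!i" "set (zs!i) \<subseteq> ?Q" using bT vz i by blast+
              from TA3[OF i this] show ?thesis by (simp add: sgA[OF i] zadd_dih)
            qed
            then show ?thesis by (simp add: blk_def)
          qed
          show "zadd p (f (map ?it zs)) B = f (map ?it (blk ms TT zs))"
            using a iter_zadd_map[of p "\<lambda>i. ?it (zs!i)" AA n'] unfolding m1 m2 B_def n' by (simp del: upt_Suc)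
        qed
      qed
    qed
  qed
qed


end
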